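(* Let $C_n=((v_0,\dots,v_{n-1}),c)$ be an edge-colored oriented cycle of order $n$. Suppose there exist $i,j\in[n]$ with $i\neq j$ such that for every $s\in[n]$ at least one of the following holds (which one may depend on $s$): $c(e_{i+s-1})=c(e_{j+s-1})$ and $c(e_{i+s})=c(e_{j+s})$; or $c(e_{i+s-1})=\overline{c(e_{j+s})}$ and $c(e_{i+s})=\overline{c(e_{j+s-1})}$. Then one of the following holds: (1) the map $v_x\mapsto v_{x+j-i}$ ($x\in[n]$) is a color respecting automorphism of $C_n$; or (2) the map $v_x\mapsto v_{x+2}$ ($x\in[n]$) is a color respecting automorphism of $C_n$ and $c(e)_1=0$ for every edge $e$ of $C_n$.
   Context: All indices are taken modulo $n$. Let $v_0,\dots,v_{n-1}$ be distinct vertices, $e_i=\{v_i,v_{i+1}\}$, and $A$ a set of colors. An edge-colored oriented cycle is $C_n=((v_0,\dots,v_{n-1}),c)$ with $c:\{e_0,\dots,e_{n-1}\}\to\mathbb F_3\times A$; $c(e)_1\in\mathbb F_3$ is the orientation and $c(e)_2\in A$ the undirected color, and $\overline{c(e)}:=(-c(e)_1,c(e)_2)$. A bijection $\varphi$ of $\{v_0,\dots,v_{n-1}\}$ is a color respecting automorphism if for every $i$ there is $j$ with $\{\varphi(v_i),\varphi(v_{i+1})\}=\{v_j,v_{j+1}\}$ and the color of $e_i$ satisfies $c(e_i)=c(e_j)$ if $(\varphi(v_i),\varphi(v_{i+1}))=(v_j,v_{j+1})$, and $c(e_i)=\overline{c(e_j)}$ if $(\varphi(v_i),\varphi(v_{i+1}))=(v_{j+1},v_j)$.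 *)

theory Defs
  imports Main "HOL-Library.Numeral_Type"
begin

text \<open>An edge-colored oriented cycle of order n: distinct vertices vx 0, ..., vx (n-1)
(vx injective on {..<n}), edges e_k = {v_k, v_(k+1)} with indices taken modulo n,
and a coloring c of the edges with values in F_3 x A (F_3 is the numeral type 3).\<close>

definition cyc_vert :: "nat \<Rightarrow> (nat \<Rightarrow> 'v) \<Rightarrow> int \<Rightarrow> 'v" where
  "cyc_vert n vx k = vx (nat (k mod int n))"

definition cyc_edge :: "nat \<Rightarrow> (nat \<Rightarrow> 'v) \<Rightarrow> int \<Rightarrow> 'v set" where
  "cyc_edge n vx k = {cyc_vert n vx k, cyc_vert n vx (k + 1)}"

definition cyc_col :: "nat \<Rightarrow> (nat \<Rightarrow> 'v) \<Rightarrow> ('v set \<Rightarrow> 3 \<times> 'a) \<Rightarrow> int \<Rightarrow> 3 \<times> 'a" where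
  "cyc_col n vx c k = c (cyc_edge n vx k)"

definition col_bar :: "3 \<times> 'a \<Rightarrow> 3 \<times> 'a" where
  "col_bar x = (- fst x, snd x)"

definition cyc_verts :: "nat \<Rightarrow> (nat \<Rightarrow> 'v) \<Rightarrow> 'v set" where
  "cyc_verts n vx = vx ` {..<n}"

definition color_resp_aut ::
  "nat \<Rightarrow> (nat \<Rightarrow> 'v) \<Rightarrow> ('v set \<Rightarrow> 3 \<times> 'a) \<Rightarrow> ('v \<Rightarrow> 'v) \<Rightarrow> bool" where
  "color_resp_aut n vx c \<phi> \<longleftrightarrow>
     bij_betw \<phi> (cyc_verts n vx) (cyc_verts n vx) \<and>
     (\<forall>i\<in>{0..<int n}. \<exists>j\<in>{0..<int n}.
        {\<phi> (cyc_vert n vx i), \<phi> (cyc_vert n vx (i + 1))} = {cyc_vert n vx j, cyc_vert n vx (j + 1)} \<and>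
        ((\<phi> (cyc_vert n vx i), \<phi> (cyc_vert n vx (i + 1))) = (cyc_vert n vx j, cyc_vert n vx (j + 1))
           \<longrightarrow> cyc_col n vx c i = cyc_col n vx c j) \<and>
        ((\<phi> (cyc_vert n vx i), \<phi> (cyc_vert n vx (i + 1))) = (cyc_vert n vx (j + 1), cyc_vert n vx j)
           \<longrightarrow> cyc_col n vx c i = col_bar (cyc_col n vx c j)))"

text \<open>The rotation map v_x \<mapsto> v_(x+d) on the vertex set (arbitrary outside it).\<close>
definition cyc_rot :: "nat \<Rightarrow> (nat \<Rightarrow> 'v) \<Rightarrow> int \<Rightarrow> 'v \<Rightarrow> 'v" where
  "cyc_rot n vx d y = cyc_vert n vx (int (the_inv_into {..<n} vx y) + d)"

end

theory Submission imports Defs begin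

lemma three_neg: assumes "(x::3) = - x" shows "x = 0"
proof (cases x)
  case (of_int z)
  then have "z = 0 \<or> z = 1 \<or> z = 2" by simp arith
  then show ?thesis using of_int assms by auto
qed

lemma shift_mod: "(x::int) mod m = y mod m \<Longrightarrow> (x + z) mod m = (y + z) mod m"
  by (metis mod_add_left_eq)

lemma col_mod:
  assumes "k mod int n = k' mod int n"
  shows "cyc_col n vx c k = cyc_col n vx c k'"
proof -
  have "cyc_vert n vx k = cyc_vert n vx k'" using assms by (simp add: cyc_vert_def)
  moreover have "cyc_vert n vx (k+1) = cyc_vert n vx (k'+1)"
    using shift_mod[OF assms, of 1] by (simp add: cyc_vert_def)
  ultimately show ?thesis by (simp add: cyc_col_def cyc_edge_def)
qed

lemma rot_vert:
  assumes "n > 0" "inj_on vx {..<n}"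
  shows "cyc_rot n vx D (cyc_vert n vx k) = cyc_vert n vx (k + D)"
proof -
  have lt: "nat (k mod int n) < n" using assms(1)
    by (metis Euclidean_Rings.pos_mod_bound of_nat_0_less_iff nat_less_iff pos_mod_sign)
  have "the_inv_into {..<n} vx (vx (nat (k mod int n))) = nat (k mod int n)"
    using the_inv_into_f_f[OF assms(2)] lt by simp
  then have "cyc_rot n vx D (cyc_vert n vx k) = cyc_vert n vx (k mod int n + D)"
    using assms(1) by (simp add: cyc_rot_def cyc_vert_def)
  also have "\<dots> = cyc_vert n vx (k + D)"
    unfolding cyc_vert_def by (simp add: mod_add_left_eq)
  finally show ?thesis .
qed

lemma verts_eq: assumes "n > 0" shows "cyc_verts n vx = range (cyc_vert n vx)"
proof
  show "cyc_verts n vx \<subseteq> range (cyc_vert n vx)"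
  proof
    fix y assume "y \<in> cyc_verts n vx"
    then obtain m where "m < n" "y = vx m" by (auto simp: cyc_verts_def)
    then have "y = cyc_vert n vx (int m)" by (simp add: cyc_vert_def)
    then show "y \<in> range (cyc_vert n vx)" by simp
  qed
  show "range (cyc_vert n vx) \<subseteq> cyc_verts n vx"
  proof
    fix y assume "y \<in> range (cyc_vert n vx)"
    then obtain k where "y = cyc_vert n vx k" by auto
    moreover have "nat (k mod int n) < n" using assms
      by (metis Euclidean_Rings.pos_mod_bound of_nat_0_less_iff nat_less_iff pos_mod_sign)
    ultimately show "y \<in> cyc_verts n vx" by (auto simp: cyc_verts_def cyc_vert_def)
  qed
qed

lemma vert_next_ne:
  assumes "n \<ge> 3" "inj_on vx {..<n}"
  shows "cyc_vert n vx k \<noteq> cyc_vert n vx (k + 1)"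
proof
  assume h: "cyc_vert n vx k = cyc_vert n vx (k + 1)"
  have p: "int n > 0" using assms by simp
  have l1: "nat (k mod int n) < n" using p
    by (metis Euclidean_Rings.pos_mod_bound nat_less_iff pos_mod_sign)
  have l2: "nat ((k+1) mod int n) < n" using p
    by (metis Euclidean_Rings.pos_mod_bound nat_less_iff pos_mod_sign)
  have "nat (k mod int n) = nat ((k+1) mod int n)"
    using h inj_onD[OF assms(2)] l1 l2 by (simp add: cyc_vert_def)
  moreover have "k mod int n \<ge> 0" "(k+1) mod int n \<ge> 0" using p by simp_all
  ultimately have "k mod int n = (k+1) mod int n" by simp
  then have "int n dvd 1" by (metis add_diff_cancel_left' mod_eq_dvd_iff)
  then show False using assms by simp
qed

lemma rot_aut:
  assumes "n \<ge> 3" "inj_on vx {..<n}"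
    and per: "\<And>k. cyc_col n vx c (k + D) = cyc_col n vx c k"
  shows "color_resp_aut n vx c (cyc_rot n vx D)"
proof -
  have n0: "n > 0" using assms by simp
  let ?f = "cyc_rot n vx D"
  have img: "?f ` cyc_verts n vx = cyc_verts n vx"
  proof
    show "?f ` cyc_verts n vx \<subseteq> cyc_verts n vx"
    proof
      fix y assume "y \<in> ?f ` cyc_verts n vx"
      then obtain k where y: "y = ?f (cyc_vert n vx k)" using verts_eq[OF n0, of vx] by auto
      then have "y = cyc_vert n vx (k + D)" using rot_vert[OF n0 assms(2)] by simp
      then show "y \<in> cyc_verts n vx" using verts_eq[OF n0, of vx] by auto
    qed
    show "cyc_verts n vx \<subseteq> ?f ` cyc_verts n vx"
    proof
      fix y assume "y \<in> cyc_verts n vx"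
      then obtain k where y: "y = cyc_vert n vx k" using verts_eq[OF n0, of vx] by auto
      have "y = ?f (cyc_vert n vx (k - D))" using y rot_vert[OF n0 assms(2)] by simp
      then show "y \<in> ?f ` cyc_verts n vx" using verts_eq[OF n0, of vx] by auto
    qed
  qed
  have fin: "finite (cyc_verts n vx)" by (simp add: cyc_verts_def)
  have bij: "bij_betw ?f (cyc_verts n vx) (cyc_verts n vx)"
    unfolding bij_betw_def using img finite_surj_inj[OF fin] by auto
  show ?thesis unfolding color_resp_aut_def
  proof (intro conjI bij ballI)
    fix k assume k: "k \<in> {0..<int n}"
    define j where "j = (k + D) mod int n"
    have j: "j \<in> {0..<int n}" using n0 by (simp add: j_def)
    have v1: "?f (cyc_vert n vx k) = cyc_vert n vx j"
      using rot_vert[OF n0 assms(2)] by (simp add: j_def cyc_vert_def)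
    have v2: "?f (cyc_vert n vx (k+1)) = cyc_vert n vx (j+1)"
      using rot_vert[OF n0 assms(2)] shift_mod[of "(k+D)" "int n" j 1]
      by (simp add: j_def cyc_vert_def algebra_simps)
    have cj: "cyc_col n vx c j = cyc_col n vx c k"
      using col_mod[of j n "k+D" vx c] per[of k] by (simp add: j_def)
    show "\<exists>j\<in>{0..<int n}.
        {?f (cyc_vert n vx k), ?f (cyc_vert n vx (k + 1))} = {cyc_vert n vx j, cyc_vert n vx (j + 1)} \<and>
        ((?f (cyc_vert n vx k), ?f (cyc_vert n vx (k + 1))) = (cyc_vert n vx j, cyc_vert n vx (j + 1))
           \<longrightarrow> cyc_col n vx c k = cyc_col n vx c j) \<and>
        ((?f (cyc_vert n vx k), ?f (cyc_vert n vx (k + 1))) = (cyc_vert n vx (j + 1), cyc_vert n vx j)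
           \<longrightarrow> cyc_col n vx c k = col_bar (cyc_col n vx c j))"
      using j v1 v2 cj vert_next_ne[OF assms(1,2), of j] by auto
  qed
qed


theorem mainTheorem14:
  fixes n :: nat and vx :: "nat \<Rightarrow> 'v" and c :: "'v set \<Rightarrow> 3 \<times> 'a" and i j :: int
  assumes "n \<ge> 3"
    and "inj_on vx {..<n}"
    and "i \<in> {0..<int n}" and "j \<in> {0..<int n}" and "i \<noteq> j"
    and "\<forall>s\<in>{0..<int n}.
          (cyc_col n vx c (i + s - 1) = cyc_col n vx c (j + s - 1) \<and>
           cyc_col n vx c (i + s) = cyc_col n vx c (j + s)) \<or>
          (cyc_col n vx c (i + s - 1) = col_bar (cyc_col n vx c (j + s)) \<and>
           cyc_col n vx c (i + s) = col_bar (cyc_col n vx c (j + s - 1)))"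
  shows "color_resp_aut n vx c (cyc_rot n vx (j - i)) \<or>
         (color_resp_aut n vx c (cyc_rot n vx 2) \<and>
          (\<forall>k\<in>{0..<int n}. fst (cyc_col n vx c k) = 0))"
proof -
  define a where "a = cyc_col n vx c"
  define d where "d = j - i"
  have n0: "int n > 0" using assms(1) by simp
  have per: "\<And>k k'. k mod int n = k' mod int n \<Longrightarrow> a k = a k'"
    unfolding a_def by (rule col_mod)
  have barbar: "\<And>x. col_bar (col_bar x) = x" by (simp add: col_bar_def)
  have barinj: "\<And>x y. col_bar x = col_bar y \<Longrightarrow> x = y" by (metis barbar)
  define A where "A t \<longleftrightarrow> a (t-1) = a (t+d-1) \<and> a t = a (t+d)" for t
  define B where "B t \<longleftrightarrow> a (t-1) = col_bar (a (t+d)) \<and> a t = col_bar (a (t+d-1))" for t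
  have H: "A t \<or> B t" for t
  proof -
    define s where "s = (t - i) mod int n"
    have s: "s \<in> {0..<int n}" using n0 by (simp add: s_def)
    have base: "(i + s) mod int n = t mod int n" unfolding s_def
      by (simp add: mod_add_right_eq)
    have e1: "a (i+s-1) = a (t-1)" by (rule per) (use shift_mod[OF base, of "-1"] in \<open>simp\<close>)
    have e2: "a (i+s) = a t" by (rule per) (use base in \<open>simp\<close>)
    have e3: "a (j+s-1) = a (t+d-1)" by (rule per) (use shift_mod[OF base, of "d-1"] in \<open>simp add: d_def algebra_simps\<close>)
    have e4: "a (j+s) = a (t+d)" by (rule per) (use shift_mod[OF base, of "d"] in \<open>simp add: d_def algebra_simps\<close>)
    have "(a (i + s - 1) = a (j + s - 1) \<and> a (i + s) = a (j + s)) \<or>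
          (a (i + s - 1) = col_bar (a (j + s)) \<and> a (i + s) = col_bar (a (j + s - 1)))"
      using assms(6) s unfolding a_def by blast
    then show ?thesis unfolding A_def B_def e1 e2 e3 e4 .
  qed
  have Aper: "A t \<longleftrightarrow> A t'" if "t mod int n = t' mod int n" for t t'
  proof -
    have "a (t-1) = a (t'-1)" by (rule per) (use shift_mod[OF that, of "-1"] in \<open>simp\<close>)
    moreover have "a (t+d-1) = a (t'+d-1)" by (rule per) (use shift_mod[OF that, of "d-1"] in \<open>simp add: algebra_simps\<close>)
    moreover have "a (t+d) = a (t'+d)" by (rule per) (use shift_mod[OF that, of "d"] in \<open>simp\<close>)
    moreover have "a t = a t'" by (rule per) (use that in \<open>simp\<close>)
    ultimately show ?thesis unfolding A_def by simp
  qed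
  have step: "\<not> A t \<Longrightarrow> \<not> A (t+1)" for t
  proof
    assume nA: "\<not> A t" and A1: "A (t+1)"
    then have Bt: "B t" using H by blast
    from A1 have x1: "a t = a (t+d)" unfolding A_def by simp
    from Bt have y1: "a (t-1) = col_bar (a (t+d))" and y2: "a t = col_bar (a (t+d-1))"
      unfolding B_def by auto
    have "a (t+d-1) = col_bar (a t)" using y2 barbar by metis
    then have "a (t-1) = a (t+d-1)" using y1 x1 by simp
    then show False using nA x1 unfolding A_def by simp
  qed
  show ?thesis
  proof (cases "\<forall>t. A t")
    case True
    then have "\<And>k. cyc_col n vx c (k + (j - i)) = cyc_col n vx c k"
      unfolding A_def a_def d_def by auto
    then show ?thesis using rot_aut[OF assms(1,2)] by blast
  next
    case False
    then obtain t0 where t0: "\<not> A t0" by blast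
    have allm: "\<not> A (t0 + int m)" for m
    proof (induction m)
      case 0 then show ?case using t0 by simp
    next
      case (Suc m)
      have "\<not> A (t0 + int m + 1)" by (rule step) (rule Suc.IH)
      then show ?case by (simp add: algebra_simps)
    qed
    have nA: "\<not> A t" for t
    proof -
      define m where "m = nat ((t - t0) mod int n)"
      have "(t0 + int m) mod int n = t mod int n" using n0
        by (simp add: m_def mod_add_right_eq)
      then have "A (t0 + int m) \<longleftrightarrow> A t" by (rule Aper)
      then show ?thesis using allm[of m] by simp
    qed
    then have Ball: "B t" for t using H by blast
    have p2: "a (k+2) = a k" for k
    proof -
      have "a (k-d+1) = col_bar (a k)" using Ball[of "k-d+1"] unfolding B_def by simp
      moreover have "a (k-d+1) = col_bar (a (k+2))" using Ball[of "k-d+2"] unfolding B_def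
        by (simp add: algebra_simps)
      ultimately show ?thesis using barinj by metis
    qed
    have p2n: "a (k + 2 * int m) = a k" for k m
    proof (induction m)
      case 0 then show ?case by simp
    next
      case (Suc m)
      have "a (k + 2 * int (Suc m)) = a ((k + 2 * int m) + 2)" by (simp add: algebra_simps)
      then show ?case using p2 Suc by simp
    qed
    have p2z: "a (k + 2 * z) = a k" for k z
    proof (cases "z \<ge> 0")
      case True then show ?thesis using p2n[of k "nat z"] by simp
    next
      case False
      then have "a ((k + 2*z) + 2 * int (nat (-z))) = a (k + 2*z)" using p2n by blast
      then show ?thesis using False by simp
    qed
    have dodd: "odd d"
    proof
      assume "even d"
      then obtain z where z: "d = 2*z" by blast
      have "A 0" unfolding A_def using p2z[of 0 z] p2z[of "-1" z] z by (simp add: algebra_simps)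
      then show False using nA by blast
    qed
    then obtain z where z: "d - 1 = 2*z" by (metis dvd_def odd_two_times_div_two_succ add_diff_cancel_right')
    have fst0: "fst (a t) = 0" for t
    proof -
      have "a (t+d-1) = a t" using p2z[of t z] z by (simp add: algebra_simps)
      then have "a t = col_bar (a t)" using Ball[of t] unfolding B_def by simp
      then have "fst (a t) = - fst (a t)" by (simp add: col_bar_def prod_eq_iff)
      then show ?thesis by (rule three_neg)
    qed
    have "color_resp_aut n vx c (cyc_rot n vx 2)"
      using rot_aut[OF assms(1,2)] p2 unfolding a_def by blast
    then show ?thesis using fst0 unfolding a_def by blast
  qed
qed

end
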